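(* For $\varepsilon\in(0,1/256]$, the number of pairs $(\mathcal S(\tau),\rho)$ with $\tau\in\Gamma$ and $\rho\in\{1,\dots,\lceil1/\varepsilon\rceil\}^{|\tau|}$ is $(\lceil1/\varepsilon\rceil)^{O(\sqrt{C_\varepsilon})}$.
   Context: $C_\varepsilon=\lceil\log_{1+\varepsilon}(1/\varepsilon)\rceil$. $\Gamma$ is the set of integer vectors $\tau=(\tau_1,\dots,\tau_K)\in\mathbb{Z}_{\ge0}^K$ with $0\le K=|\tau|\le\lceil2\sqrt{C_\varepsilon}\rceil$, $\tau_k+k\le\tau_{k+1}$ for $k\in[K-1]$, and $\tau_K\le C_\varepsilon-1$. For a Minimum Knapsack instance with costs indexed so that $1=c_1\ge\dots\ge c_n$, and $\tau\in\Gamma$, $\mathcal S(\tau)=\{S_1,\dots,S_K,S_\infty\}$ with $S_k=\{i\in\{2,\dots,n\}:(1+\varepsilon)^{-\tau_k}\ge c_i>(1+\varepsilon)^{-\min\{\tau_k+k,C_\varepsilon\}}\}$ for $k\in[K]$, and $S_\infty=\{i\in\{2,\dots,n\}: c_i\le(1+\varepsilon)^{-C_\varepsilon}\text{ and } c_i<\min_{l\in S_K}c_l\}$ (the second condition omitted if $K=0$). *)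

theory Defs
  imports Complex_Main
begin

definition Ceps :: "real \<Rightarrow> nat" where
  "Ceps \<epsilon> = nat \<lceil>log (1 + \<epsilon>) (1 / \<epsilon>)\<rceil>"

(* Gamma: tau is a list (tau_1,...,tau_K), 0-indexed as tau!0 .. tau!(K-1).
   The condition tau_k + k <= tau_{k+1} (k in [K-1], 1-indexed) becomes
   tau!i + (i+1) <= tau!(i+1) for i < K-1. *)
definition Gamma :: "real \<Rightarrow> nat list set" where
  "Gamma \<epsilon> = {\<tau>. length \<tau> \<le> nat \<lceil>2 * sqrt (real (Ceps \<epsilon>))\<rceil>
      \<and> (\<forall>i. i + 1 < length \<tau> \<longrightarrow> \<tau> ! i + (i + 1) \<le> \<tau> ! (i + 1))
      \<and> (\<tau> \<noteq> [] \<longrightarrow> last \<tau> \<le> Ceps \<epsilon> - 1)}"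

(* S_k for k = i+1 (0-indexed i < K) *)
definition Sk :: "(nat \<Rightarrow> real) \<Rightarrow> nat \<Rightarrow> real \<Rightarrow> nat list \<Rightarrow> nat \<Rightarrow> nat set" where
  "Sk c n \<epsilon> \<tau> i = {j \<in> {2..n}. (1 + \<epsilon>) powi (- int (\<tau> ! i)) \<ge> c j
      \<and> c j > (1 + \<epsilon>) powi (- int (min (\<tau> ! i + (i + 1)) (Ceps \<epsilon>)))}"

(* S_infinity; the condition c_j < min_{l in S_K} c_l is read with min over the
   empty set being +infinity, i.e. as: c_j < c_l for all l in S_K. *)
definition Sinf :: "(nat \<Rightarrow> real) \<Rightarrow> nat \<Rightarrow> real \<Rightarrow> nat list \<Rightarrow> nat set" where
  "Sinf c n \<epsilon> \<tau> = {j \<in> {2..n}. c j \<le> (1 + \<epsilon>) powi (- int (Ceps \<epsilon>))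
      \<and> (\<tau> \<noteq> [] \<longrightarrow> (\<forall>l \<in> Sk c n \<epsilon> \<tau> (length \<tau> - 1). c j < c l))}"

(* S(tau) = {S_1,...,S_K,S_inf}, represented as the list [S_1,...,S_K] together with S_inf *)
definition Sfam :: "(nat \<Rightarrow> real) \<Rightarrow> nat \<Rightarrow> real \<Rightarrow> nat list \<Rightarrow> nat set list \<times> nat set" where
  "Sfam c n \<epsilon> \<tau> = (map (Sk c n \<epsilon> \<tau>) [0..<length \<tau>], Sinf c n \<epsilon> \<tau>)"

definition pairs :: "(nat \<Rightarrow> real) \<Rightarrow> nat \<Rightarrow> real \<Rightarrow> ((nat set list \<times> nat set) \<times> nat list) set" where
  "pairs c n \<epsilon> = {(Sfam c n \<epsilon> \<tau>, \<rho>) | \<tau> \<rho>. \<tau> \<in> Gamma \<epsilon> \<and> length \<rho> = length \<tau>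
      \<and> set \<rho> \<subseteq> {1..nat \<lceil>1 / \<epsilon>\<rceil>}}"

end

theory Submission
  imports Defs
begin

lemma card_lists_le_bound:
  assumes "finite A" "card A \<ge> 1"
  shows "card {xs. set xs \<subseteq> A \<and> length xs \<le> L} \<le> (L+1) * card A ^ L"
proof -
  have "(\<Sum>i\<le>L. card A^i) \<le> (\<Sum>i\<le>L. card A^L)"
    by (rule sum_mono) (use assms in \<open>auto intro: power_increasing\<close>)
  then show ?thesis using card_lists_length_le[OF assms(1), of L] by simp
qed

lemma Gamma_sub:
  assumes "\<tau> \<in> Gamma \<epsilon>"
  shows "set \<tau> \<subseteq> {0..<Ceps \<epsilon>} \<or> Ceps \<epsilon> = 0"
proof (cases "Ceps \<epsilon> = 0")
  case False
  have inc: "\<And>i. i + 1 < length \<tau> \<Longrightarrow> \<tau> ! i \<le> \<tau> ! (i + 1)"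
    using assms unfolding Gamma_def by force
  have mono: "\<And>i j. i + j < length \<tau> \<Longrightarrow> \<tau> ! i \<le> \<tau> ! (i + j)"
  proof -
    fix i j show "i + j < length \<tau> \<Longrightarrow> \<tau> ! i \<le> \<tau> ! (i + j)"
    proof (induction j)
      case 0 then show ?case by simp
    next
      case (Suc j)
      then have "\<tau> ! i \<le> \<tau> ! (i + j)" by simp
      also have "\<dots> \<le> \<tau> ! (i + j + 1)" using inc[of "i+j"] Suc.prems by simp
      finally show ?case by simp
    qed
  qed
  have "set \<tau> \<subseteq> {0..<Ceps \<epsilon>}"
  proof
    fix x assume "x \<in> set \<tau>"
    then obtain i where i: "i < length \<tau>" "\<tau> ! i = x" by (auto simp: in_set_conv_nth)
    then have ne: "\<tau> \<noteq> []" by auto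
    have "last \<tau> = \<tau> ! (i + (length \<tau> - 1 - i))" using ne i by (simp add: last_conv_nth)
    then have "x \<le> last \<tau>" using mono[of i "length \<tau> - 1 - i"] i by simp
    moreover have "last \<tau> \<le> Ceps \<epsilon> - 1" using assms ne unfolding Gamma_def by auto
    ultimately show "x \<in> {0..<Ceps \<epsilon>}" using False by auto
  qed
  then show ?thesis by simp
qed simp

lemma Ceps_bound:
  assumes "0 < \<epsilon>" "\<epsilon> \<le> 1/256"
  shows "1 \<le> Ceps \<epsilon> \<and> Ceps \<epsilon> \<le> (nat \<lceil>1 / \<epsilon>\<rceil>) ^ 3 \<and> 256 \<le> nat \<lceil>1 / \<epsilon>\<rceil>"
proof -
  define r where "r = log (1 + \<epsilon>) (1 / \<epsilon>)"
  have l1: "\<epsilon> - \<epsilon>^2 \<le> ln (1 + \<epsilon>)" using assms by (intro ln_one_plus_pos_lower_bound) auto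
  have "\<epsilon>^2 \<le> \<epsilon>/2" using assms by (simp add: power2_eq_square)
  then have l1': "\<epsilon>/2 \<le> ln (1 + \<epsilon>)" using l1 by linarith
  have l2: "ln (1/\<epsilon>) \<le> 1/\<epsilon>" using assms
    by (meson ln_less_self less_eq_real_def zero_less_divide_1_iff)
  have ie: "1/\<epsilon> \<ge> 256" using assms by (simp add: field_simps)
  have lpos: "ln (1/\<epsilon>) > 0" using ie by (intro ln_gt_zero) linarith
  have r_eq: "r = ln (1/\<epsilon>) / ln (1 + \<epsilon>)" unfolding r_def log_def by simp
  have rpos: "r > 0" using r_eq lpos l1' assms by simp
  have "r \<le> (1/\<epsilon>) / (\<epsilon>/2)" unfolding r_eq using l1' l2 lpos assms
    by (intro frac_le) auto
  then have rb: "r \<le> 2 * (1/\<epsilon>)^2" by (simp add: field_simps power2_eq_square)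
  define M where "M = nat \<lceil>1 / \<epsilon>\<rceil>"
  have M1: "real M \<ge> 1/\<epsilon>" unfolding M_def by linarith
  have M256: "M \<ge> 256" using ie unfolding M_def by linarith
  have "real (Ceps \<epsilon>) \<le> r + 1" unfolding Ceps_def r_def[symmetric] using rpos by linarith
  also have "\<dots> \<le> 2 * (real M)^2 + 1" using rb M1 ie
    by (smt (verit) power_mono)
  also have "\<dots> \<le> (real M)^3"
  proof -
    have "(real M)^3 = real M * (real M)^2" by (simp add: power3_eq_cube power2_eq_square)
    moreover have "real M * (real M)^2 \<ge> 256 * (real M)^2" using M256
      by (intro mult_right_mono) auto
    moreover have "(real M)^2 \<ge> 1" using M256 by simp
    ultimately show ?thesis by linarith
  qed
  finally have "Ceps \<epsilon> \<le> M^3" by (metis of_nat_le_iff of_nat_power)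
  moreover have "1 \<le> Ceps \<epsilon>" unfolding Ceps_def r_def[symmetric] using rpos by linarith
  ultimately show ?thesis using M256 unfolding M_def by simp
qed

theorem lemma6:
  shows "\<exists>C0 :: real. \<forall>(\<epsilon>::real) (n::nat) (c::nat \<Rightarrow> real).
     0 < \<epsilon> \<and> \<epsilon> \<le> 1/256 \<and> 1 \<le> n \<and> c 1 = 1
     \<and> (\<forall>i j. 1 \<le> i \<and> i \<le> j \<and> j \<le> n \<longrightarrow> c j \<le> c i)
     \<and> (\<forall>i \<in> {1..n}. 0 < c i)
     \<longrightarrow> finite (pairs c n \<epsilon>)
       \<and> real (card (pairs c n \<epsilon>))
           \<le> real (nat \<lceil>1 / \<epsilon>\<rceil>) powr (C0 * sqrt (real (Ceps \<epsilon>)))"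
proof (intro exI[of _ 18] allI impI)
  fix \<epsilon> :: real and n :: nat and c :: "nat \<Rightarrow> real"
  assume H: "0 < \<epsilon> \<and> \<epsilon> \<le> 1/256 \<and> 1 \<le> n \<and> c 1 = 1
     \<and> (\<forall>i j. 1 \<le> i \<and> i \<le> j \<and> j \<le> n \<longrightarrow> c j \<le> c i)
     \<and> (\<forall>i \<in> {1..n}. 0 < c i)"
  define C where "C = Ceps \<epsilon>"
  define M where "M = nat \<lceil>1 / \<epsilon>\<rceil>"
  define L where "L = nat \<lceil>2 * sqrt (real C)\<rceil>"
  have CB: "1 \<le> C" "C \<le> M^3" "256 \<le> M" using Ceps_bound[of \<epsilon>] H unfolding C_def M_def by auto
  define X where "X = {xs. set xs \<subseteq> {0..<C} \<and> length xs \<le> L}"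
  define Y where "Y = {xs. set xs \<subseteq> {1..M} \<and> length xs \<le> L}"
  have fX: "finite X" unfolding X_def by (rule finite_lists_length_le) simp
  have fY: "finite Y" unfolding Y_def by (rule finite_lists_length_le) simp
  have sub: "pairs c n \<epsilon> \<subseteq> (\<lambda>(\<tau>,\<rho>). (Sfam c n \<epsilon> \<tau>, \<rho>)) ` (X \<times> Y)"
  proof
    fix p assume "p \<in> pairs c n \<epsilon>"
    then obtain \<tau> \<rho> where p: "p = (Sfam c n \<epsilon> \<tau>, \<rho>)" "\<tau> \<in> Gamma \<epsilon>" "length \<rho> = length \<tau>"
      "set \<rho> \<subseteq> {1..M}" unfolding pairs_def M_def by auto
    have "length \<tau> \<le> L" using p(2) unfolding Gamma_def L_def C_def by auto
    moreover have "set \<tau> \<subseteq> {0..<C}" using Gamma_sub[OF p(2)] CB(1) unfolding C_def by auto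
    ultimately have "(\<tau>, \<rho>) \<in> X \<times> Y" using p unfolding X_def Y_def by auto
    then show "p \<in> (\<lambda>(\<tau>,\<rho>). (Sfam c n \<epsilon> \<tau>, \<rho>)) ` (X \<times> Y)" using p(1) by force
  qed
  have fin: "finite (pairs c n \<epsilon>)" using sub fX fY by (meson finite_SigmaI finite_imageI finite_subset)
  have "card (pairs c n \<epsilon>) \<le> card ((\<lambda>(\<tau>,\<rho>). (Sfam c n \<epsilon> \<tau>, \<rho>)) ` (X \<times> Y))"
    using sub fX fY by (intro card_mono) auto
  also have "\<dots> \<le> card (X \<times> Y)" by (rule card_image_le) (use fX fY in auto)
  also have "\<dots> = card X * card Y" by (simp add: card_cartesian_product)
  also have "\<dots> \<le> ((L+1) * C^L) * ((L+1) * M^L)"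
  proof (rule mult_mono)
    show "card X \<le> (L+1) * C^L" unfolding X_def using card_lists_le_bound[of "{0..<C}" L] CB by simp
    show "card Y \<le> (L+1) * M^L" unfolding Y_def using card_lists_le_bound[of "{1..M}" L] CB by simp
  qed auto
  also have "\<dots> \<le> (M^L * (M^3)^L) * (M^L * M^L)"
  proof -
    have "L + 1 \<le> 2^L" by (induction L) auto
    also have "(2::nat)^L \<le> M^L" using CB by (intro power_mono) auto
    finally have a: "L + 1 \<le> M^L" .
    have b: "C^L \<le> (M^3)^L" using CB by (intro power_mono) auto
    show ?thesis using a b by (intro mult_mono) auto
  qed
  also have "\<dots> = M^(6*L)" by (simp add: power_mult[symmetric] power_add[symmetric])
  finally have cb: "card (pairs c n \<epsilon>) \<le> M^(6*L)" .
  have "real (card (pairs c n \<epsilon>)) \<le> real M ^ (6*L)"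
    using cb by (metis of_nat_le_iff of_nat_power)
  also have "\<dots> = real M powr (real (6*L))" using CB by (subst powr_realpow) auto
  also have "\<dots> \<le> real M powr (18 * sqrt (real C))"
  proof (rule powr_mono)
    have s1: "sqrt (real C) \<ge> 1" using CB by simp
    have "real L \<le> 2 * sqrt (real C) + 1"
    proof -
      have z: "0 \<le> \<lceil>2 * sqrt (real C)\<rceil>" using s1 by (simp only: zero_le_ceiling)
      have "real L = real_of_int \<lceil>2 * sqrt (real C)\<rceil>" unfolding L_def using z by simp
      then show ?thesis by linarith
    qed
    then show "real (6*L) \<le> 18 * sqrt (real C)" using s1 by linarith
    show "1 \<le> real M" using CB by simp
  qed
  finally show "finite (pairs c n \<epsilon>) \<and> real (card (pairs c n \<epsilon>))
           \<le> real (nat \<lceil>1 / \<epsilon>\<rceil>) powr (18 * sqrt (real (Ceps \<epsilon>)))"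
    using fin unfolding M_def C_def by simp
qed

end
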